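(* Let $((G_n)_{n\in\mathbb{N}},(\rho_n)_{n\in\mathbb{N}},(\kappa_k^n)_{k\le n})$ be a diverse $d$-ary cloning system, and let $n_0\in\mathbb{N}$ be such that $\bigcap_{k=1}^n\mathrm{Im}\,\kappa_k^n=\{1\}$ for all $n\ge n_0$. Let $x\in\mathscr{T}_d(G_* )$. If $x^{-1}[T,U]x\in F_d$ for all $d$-ary trees $T,U$ having the same number of leaves, that number being at least $n_0$, then $x\in F_d$.
   Context: Fix an integer $d\ge 2$. A $d$-ary tree is a finite rooted tree in which each non-leaf vertex has exactly $d$ ordered children; its leaves are numbered $1,\dots,n$ from left to right, and $n(T)$ is the number of leaves. For $1\le k\le n(T)$, $T_k$ denotes the tree obtained from $T$ by attaching a $d$-ary caret to the $k$-th leaf. Standard cloning maps: for $\sigma\in S_n$, $1\le k\le n$, partition $\{1,\dots,n+d-1\}$ into consecutive blocks $B^{(k)}_j=\{j\}$ ($j<k$), $B^{(k)}_k=\{k,\dots,k+d-1\}$, $B^{(k)}_j=\{j+d-1\}$ ($j>k$); $(\sigma)\varsigma_k^n\in S_{n+d-1}$ maps $B^{(k)}_j$ onto $B^{(\sigma(k))}_{\sigma(j)}$ preserving order. A $d$-ary cloning system consists of groups $(G_n)$, homomorphisms $\rho_n:G_n\to S_n$ and injective functions $\kappa_k^n:G_n\to G_{n+d-1}$ ($1\le k\le n$), written on the right with $(g)(\kappa\circ\kappa'):=((g)\kappa)\kappa'$, such that for $1\le k<\ell\le n$, $g,h\in G_n$: (C1) $(gh)\kappa_k^n=(g)\kappa^n_{\rho_n(h)k}(h)\kappa_k^n$;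 (C2) $\kappa_\ell^n\circ\kappa_k^{n+d-1}=\kappa_k^n\circ\kappa_{\ell+d-1}^{n+d-1}$; (C3) $\rho_{n+d-1}((g)\kappa_k^n)(i)=((\rho_n(g))\varsigma_k^n)(i)$ for $i\notin\{k,\dots,k+d-1\}$. $\mathscr{T}_d(G_* )$ is the group of classes $[T,g,U]$ ($T,U$ $d$-ary trees with $n$ leaves, $g\in G_n$) under the equivalence generated by $(T,g,U)\sim(T_{\rho_n(g)(k)},(g)\kappa_k^n,U_k)$, with product $[T,g,U][U,h,W]=[T,gh,W]$. We write $[T,U]=[T,1,U]$; these elements form the subgroup $F_d$ (the Higman–Thompson group). The system is diverse if some $n_0$ satisfies $\bigcap_{k=1}^n\mathrm{Im}\,\kappa_k^n=\{1\}$ for all $n\ge n_0$. *)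

theory Defs
  imports "HOL-Algebra.Sym_Groups"
begin

datatype tree = Lf | Nd "tree list"

fun dary :: "nat \<Rightarrow> tree \<Rightarrow> bool" where
  "dary d Lf = True"
| "dary d (Nd ts) = (length ts = d \<and> (\<forall>t\<in>set ts. dary d t))"

fun leaves :: "tree \<Rightarrow> nat" where
  "leaves Lf = 1"
| "leaves (Nd ts) = sum_list (map leaves ts)"

text \<open>Attach a d-ary caret to the k-th leaf (leaves numbered from 1, left to right).\<close>
fun add_caret :: "nat \<Rightarrow> nat \<Rightarrow> tree \<Rightarrow> tree"
and add_caret_list :: "nat \<Rightarrow> nat \<Rightarrow> tree list \<Rightarrow> tree list" where
  "add_caret d k Lf = (if k = 1 then Nd (replicate d Lf) else Lf)"
| "add_caret d k (Nd ts) = Nd (add_caret_list d k ts)"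
| "add_caret_list d k [] = []"
| "add_caret_list d k (t # ts) =
     (if k \<le> leaves t then add_caret d k t # ts
      else t # add_caret_list d (k - leaves t) ts)"

text \<open>Index of the block B^(k)_j containing position i of {1..n+d-1}.\<close>
definition blk :: "nat \<Rightarrow> nat \<Rightarrow> nat \<Rightarrow> nat" where
  "blk d k i = (if i < k then i else if i < k + d then k else i - (d - 1))"

definition blk_off :: "nat \<Rightarrow> nat \<Rightarrow> nat \<Rightarrow> nat" where
  "blk_off d k i = (if k \<le> i \<and> i < k + d then i - k else 0)"

definition blk_start :: "nat \<Rightarrow> nat \<Rightarrow> nat \<Rightarrow> nat" where
  "blk_start d k j = (if j \<le> k then j else j + (d - 1))"

text \<open>(sigma) varsigma^n_k : maps B^(k)_j onto B^(sigma k)_(sigma j), order preserving.\<close>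
definition clone_perm :: "nat \<Rightarrow> nat \<Rightarrow> nat \<Rightarrow> (nat \<Rightarrow> nat) \<Rightarrow> nat \<Rightarrow> nat" where
  "clone_perm d n k \<sigma> i =
     (if i \<in> {1..n + d - 1}
      then blk_start d (\<sigma> k) (\<sigma> (blk d k i)) + blk_off d k i
      else i)"

text \<open>G n is the group G_n, rho n : G_n -> S_n, kappa n k is the cloning map kappa^n_k
  (applied to group elements as ordinary functions; the paper writes them on the right).\<close>
definition cloning_system ::
  "nat \<Rightarrow> (nat \<Rightarrow> 'g monoid) \<Rightarrow> (nat \<Rightarrow> 'g \<Rightarrow> nat \<Rightarrow> nat) \<Rightarrow> (nat \<Rightarrow> nat \<Rightarrow> 'g \<Rightarrow> 'g) \<Rightarrow> bool"
where
  "cloning_system d G rho kappa \<longleftrightarrow>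
     (\<forall>n\<ge>1. group (G n))
   \<and> (\<forall>n\<ge>1. rho n \<in> hom (G n) (sym_group n))
   \<and> (\<forall>n\<ge>1. \<forall>k\<in>{1..n}.
          kappa n k \<in> carrier (G n) \<rightarrow> carrier (G (n + d - 1))
        \<and> inj_on (kappa n k) (carrier (G n)))
   \<and> (\<forall>n\<ge>1. \<forall>k\<in>{1..n}. \<forall>g\<in>carrier (G n). \<forall>h\<in>carrier (G n).
          kappa n k (g \<otimes>\<^bsub>G n\<^esub> h)
            = kappa n (rho n h k) g \<otimes>\<^bsub>G (n + d - 1)\<^esub> kappa n k h)
   \<and> (\<forall>n\<ge>1. \<forall>k l. 1 \<le> k \<and> k < l \<and> l \<le> n \<longrightarrow>
        (\<forall>g\<in>carrier (G n).
          kappa (n + d - 1) k (kappa n l g) = kappa (n + d - 1) (l + d - 1) (kappa n k g)))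
   \<and> (\<forall>n\<ge>1. \<forall>k\<in>{1..n}. \<forall>g\<in>carrier (G n). \<forall>i\<in>{1..n + d - 1}.
        i \<notin> {k..k + d - 1} \<longrightarrow>
          rho (n + d - 1) (kappa n k g) i = clone_perm d n k (rho n g) i)"

definition diverse_from ::
  "nat \<Rightarrow> (nat \<Rightarrow> 'g monoid) \<Rightarrow> (nat \<Rightarrow> nat \<Rightarrow> 'g \<Rightarrow> 'g) \<Rightarrow> nat \<Rightarrow> bool" where
  "diverse_from d G kappa n0 \<longleftrightarrow>
     (\<forall>n\<ge>n0. (\<Inter>k\<in>{1..n}. kappa n k ` carrier (G n)) = {\<one>\<^bsub>G (n + d - 1)\<^esub>})"

definition diverse ::
  "nat \<Rightarrow> (nat \<Rightarrow> 'g monoid) \<Rightarrow> (nat \<Rightarrow> nat \<Rightarrow> 'g \<Rightarrow> 'g) \<Rightarrow> bool" where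
  "diverse d G kappa \<longleftrightarrow> (\<exists>n0. diverse_from d G kappa n0)"

definition valid_triple :: "nat \<Rightarrow> (nat \<Rightarrow> 'g monoid) \<Rightarrow> tree \<times> 'g \<times> tree \<Rightarrow> bool" where
  "valid_triple d G t = (case t of (T, g, U) \<Rightarrow>
     dary d T \<and> dary d U \<and> leaves T = leaves U \<and> g \<in> carrier (G (leaves T)))"

definition expansion ::
  "nat \<Rightarrow> (nat \<Rightarrow> 'g monoid) \<Rightarrow> (nat \<Rightarrow> 'g \<Rightarrow> nat \<Rightarrow> nat) \<Rightarrow> (nat \<Rightarrow> nat \<Rightarrow> 'g \<Rightarrow> 'g)
   \<Rightarrow> ((tree \<times> 'g \<times> tree) \<times> (tree \<times> 'g \<times> tree)) set" where
  "expansion d G rho kappa =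
     {((T, g, U), (add_caret d (rho (leaves T) g k) T, kappa (leaves T) k g, add_caret d k U)) |
        T g U k. valid_triple d G (T, g, U) \<and> 1 \<le> k \<and> k \<le> leaves T}"

definition tclass ::
  "nat \<Rightarrow> (nat \<Rightarrow> 'g monoid) \<Rightarrow> (nat \<Rightarrow> 'g \<Rightarrow> nat \<Rightarrow> nat) \<Rightarrow> (nat \<Rightarrow> nat \<Rightarrow> 'g \<Rightarrow> 'g)
   \<Rightarrow> tree \<times> 'g \<times> tree \<Rightarrow> (tree \<times> 'g \<times> tree) set" where
  "tclass d G rho kappa t =
     {s. (t, s) \<in> (expansion d G rho kappa \<union> (expansion d G rho kappa)\<inverse>)\<^sup>*}"

definition Tgroup ::
  "nat \<Rightarrow> (nat \<Rightarrow> 'g monoid) \<Rightarrow> (nat \<Rightarrow> 'g \<Rightarrow> nat \<Rightarrow> nat) \<Rightarrow> (nat \<Rightarrow> nat \<Rightarrow> 'g \<Rightarrow> 'g)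
   \<Rightarrow> (tree \<times> 'g \<times> tree) set set" where
  "Tgroup d G rho kappa = {tclass d G rho kappa t | t. valid_triple d G t}"

definition tmult ::
  "nat \<Rightarrow> (nat \<Rightarrow> 'g monoid) \<Rightarrow> (nat \<Rightarrow> 'g \<Rightarrow> nat \<Rightarrow> nat) \<Rightarrow> (nat \<Rightarrow> nat \<Rightarrow> 'g \<Rightarrow> 'g)
   \<Rightarrow> (tree \<times> 'g \<times> tree) set \<Rightarrow> (tree \<times> 'g \<times> tree) set \<Rightarrow> (tree \<times> 'g \<times> tree) set" where
  "tmult d G rho kappa x y =
     (SOME z. \<exists>T g U h W. (T, g, U) \<in> x \<and> (U, h, W) \<in> y \<and>
        z = tclass d G rho kappa (T, g \<otimes>\<^bsub>G (leaves T)\<^esub> h, W))"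

definition tinv ::
  "nat \<Rightarrow> (nat \<Rightarrow> 'g monoid) \<Rightarrow> (nat \<Rightarrow> 'g \<Rightarrow> nat \<Rightarrow> nat) \<Rightarrow> (nat \<Rightarrow> nat \<Rightarrow> 'g \<Rightarrow> 'g)
   \<Rightarrow> (tree \<times> 'g \<times> tree) set \<Rightarrow> (tree \<times> 'g \<times> tree) set" where
  "tinv d G rho kappa x =
     (SOME z. \<exists>T g U. (T, g, U) \<in> x \<and>
        z = tclass d G rho kappa (U, inv\<^bsub>G (leaves T)\<^esub> g, T))"

definition tree_pair ::
  "nat \<Rightarrow> (nat \<Rightarrow> 'g monoid) \<Rightarrow> (nat \<Rightarrow> 'g \<Rightarrow> nat \<Rightarrow> nat) \<Rightarrow> (nat \<Rightarrow> nat \<Rightarrow> 'g \<Rightarrow> 'g)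
   \<Rightarrow> tree \<Rightarrow> tree \<Rightarrow> (tree \<times> 'g \<times> tree) set" where
  "tree_pair d G rho kappa T U = tclass d G rho kappa (T, \<one>\<^bsub>G (leaves T)\<^esub>, U)"

definition Fd ::
  "nat \<Rightarrow> (nat \<Rightarrow> 'g monoid) \<Rightarrow> (nat \<Rightarrow> 'g \<Rightarrow> nat \<Rightarrow> nat) \<Rightarrow> (nat \<Rightarrow> nat \<Rightarrow> 'g \<Rightarrow> 'g)
   \<Rightarrow> (tree \<times> 'g \<times> tree) set set" where
  "Fd d G rho kappa = {tree_pair d G rho kappa T U | T U.
      dary d T \<and> dary d U \<and> leaves T = leaves U}"

end

theory Submission
  imports Defs
begin

fun ref :: "nat \<Rightarrow> tree \<Rightarrow> tree \<Rightarrow> bool" and refs :: "nat \<Rightarrow> tree list \<Rightarrow> tree list \<Rightarrow> bool" where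
  "ref d R Lf = dary d R"
| "ref d Lf (Nd vs) = False"
| "ref d (Nd rs) (Nd vs) = (length vs = d \<and> refs d rs vs)"
| "refs d [] [] = True"
| "refs d (r # rs) (v # vs) = (ref d r v \<and> refs d rs vs)"
| "refs d [] (v # vs) = False"
| "refs d (r # rs) [] = False"

fun sub :: "tree \<Rightarrow> tree \<Rightarrow> nat \<Rightarrow> tree" and subl :: "tree list \<Rightarrow> tree list \<Rightarrow> nat \<Rightarrow> tree" where
  "sub R Lf k = R"
| "sub Lf (Nd vs) k = Lf"
| "sub (Nd rs) (Nd vs) k = subl rs vs k"
| "subl (r # rs) (v # vs) k = (if k \<le> leaves v then sub r v k else subl rs vs (k - leaves v))"
| "subl [] vs k = Lf"
| "subl (r # rs) [] k = Lf"

lemma leaves_pos: "d \<ge> 1 \<Longrightarrow> dary d V \<Longrightarrow> leaves V \<ge> 1"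
proof (induction V)
  case Lf
  then show ?case by simp
next
  case (Nd ts)
  then obtain t where "t \<in> set ts" by (cases ts) auto
  with Nd have "leaves t \<ge> 1" by auto
  moreover have "leaves t \<le> sum_list (map leaves ts)"
    using \<open>t \<in> set ts\<close> by (simp add: member_le_sum_list)
  ultimately show ?case by simp
qed

lemma add_caret_props:
  assumes "d \<ge> 1"
  shows "dary d V \<Longrightarrow> 1 \<le> k \<Longrightarrow> k \<le> leaves V \<Longrightarrow>
     dary d (add_caret d k V) \<and> leaves (add_caret d k V) = leaves V + d - 1"
proof (induction V arbitrary: k)
  case Lf
  then show ?case by (simp add: sum_list_replicate)
next
  case (Nd ts)
  have "(\<forall>t\<in>set ts. dary d t) \<Longrightarrow> 1 \<le> k \<Longrightarrow> k \<le> sum_list (map leaves ts) \<Longrightarrow>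
     length (add_caret_list d k ts) = length ts \<and> (\<forall>t\<in>set (add_caret_list d k ts). dary d t)
     \<and> sum_list (map leaves (add_caret_list d k ts)) = sum_list (map leaves ts) + d - 1" for k
    using Nd.IH
  proof (induction ts arbitrary: k)
    case Nil
    then show ?case by simp
  next
    case (Cons t ts)
    have IHt: "dary d (add_caret d k' t) \<and> leaves (add_caret d k' t) = leaves t + d - 1"
      if "1 \<le> k'" "k' \<le> leaves t" for k'
      using Cons.prems(4)[of t k'] Cons.prems(1) that by simp
    show ?case
    proof (cases "k \<le> leaves t")
      case True
      with IHt[of k] Cons.prems(1,2) show ?thesis by simp
    next
      case False
      have "1 \<le> leaves t" using leaves_pos[OF assms] Cons.prems by auto
      have IH: "length (add_caret_list d (k - leaves t) ts) = length ts \<and>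
           (\<forall>t\<in>set (add_caret_list d (k - leaves t) ts). dary d t) \<and>
           sum_list (map leaves (add_caret_list d (k - leaves t) ts)) = sum_list (map leaves ts) + d - 1"
        apply (rule Cons.IH)
        using Cons.prems False by auto
      with False Cons.prems(1) assms show ?thesis by auto
    qed
  qed
  with Nd.prems show ?case by auto
qed

lemma add_caret_comm:
  assumes d1: "d \<ge> 1"
  shows "dary d V \<Longrightarrow> 1 \<le> k \<Longrightarrow> k < l \<Longrightarrow> l \<le> leaves V \<Longrightarrow>
     add_caret d (l + d - 1) (add_caret d k V) = add_caret d k (add_caret d l V)"
proof (induction V arbitrary: k l)
  case Lf
  then show ?case by simp
next
  case (Nd ts)
  have "(\<forall>t\<in>set ts. dary d t) \<Longrightarrow> 1 \<le> k \<Longrightarrow> k < l \<Longrightarrow> l \<le> sum_list (map leaves ts) \<Longrightarrow>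
     add_caret_list d (l + d - 1) (add_caret_list d k ts) = add_caret_list d k (add_caret_list d l ts)" for k l
    using Nd.IH
  proof (induction ts arbitrary: k l)
    case Nil
    then show ?case by simp
  next
    case (Cons t ts)
    have dt: "dary d t" using Cons.prems(1) by simp
    have lt1: "1 \<le> leaves t" using leaves_pos[OF d1 dt] .
    have IHt: "add_caret d (l' + d - 1) (add_caret d k' t) = add_caret d k' (add_caret d l' t)"
      if "1 \<le> k'" "k' < l'" "l' \<le> leaves t" for k' l'
      using Cons.prems(5)[of t k' l'] dt that by simp
    have lk: "leaves (add_caret d k' t) = leaves t + d - 1" if "1 \<le> k'" "k' \<le> leaves t" for k'
      using add_caret_props[OF d1 dt that] by simp
    show ?case
    proof (cases "l \<le> leaves t")
      case True
      then have "k \<le> leaves t" using Cons.prems by simp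
      moreover have "l + d - 1 \<le> leaves t + d - 1" "k \<le> leaves t + d - 1" using True \<open>k \<le> leaves t\<close> d1 by auto
      ultimately show ?thesis using True IHt[of k l] lk[of k] lk[of l] Cons.prems(2,3) d1 by simp
    next
      case l: False
      show ?thesis
      proof (cases "k \<le> leaves t")
        case True
        moreover have "\<not> l + d - 1 \<le> leaves t + d - 1" using l d1 by auto
        ultimately show ?thesis using l lk[of k] Cons.prems(2,3) d1 by simp
      next
        case False
        have IH: "add_caret_list d (l - leaves t + d - 1) (add_caret_list d (k - leaves t) ts) =
           add_caret_list d (k - leaves t) (add_caret_list d (l - leaves t) ts)"
          apply (rule Cons.IH)
          using Cons.prems False l by auto
        have "l + d - 1 - leaves t = l - leaves t + d - 1" using l d1 by simp
        moreover have "\<not> l + d - 1 \<le> leaves t" using l d1 by auto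
        ultimately show ?thesis using IH False l d1 by simp
      qed
    qed
  qed
  with Nd.prems show ?case by auto
qed

lemma refs_eq [simp]: "refs d rs vs = list_all2 (ref d) rs vs"
  apply (induction rs arbitrary: vs)
   apply (case_tac vs; simp)
  apply (case_tac vs; simp)
  done

lemma length_acl [simp]: "length (add_caret_list d k ts) = length ts"
  by (induction ts arbitrary: k) auto

lemma list_all2_replicate_right: "list_all2 P xs (replicate n y) \<longleftrightarrow> length xs = n \<and> (\<forall>x\<in>set xs. P x y)"
  by (induction xs arbitrary: n) (auto, (case_tac n; simp)+)

lemma ref_dary: "ref d R V \<Longrightarrow> dary d R \<and> dary d V"
proof (induction V arbitrary: R)
  case Lf
  then show ?case by simp
next
  case (Nd vs)
  then obtain rs where R: "R = Nd rs" by (cases R) auto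
  with Nd.prems have L: "length vs = d" "list_all2 (ref d) rs vs" by auto
  then have "length rs = d" by (simp add: list_all2_lengthD)
  moreover have "\<forall>i<length vs. dary d (rs ! i) \<and> dary d (vs ! i)"
  proof (intro allI impI)
    fix i assume i: "i < length vs"
    then have "ref d (rs ! i) (vs ! i)" using L by (simp add: list_all2_conv_all_nth)
    then show "dary d (rs ! i) \<and> dary d (vs ! i)" using Nd.IH[OF nth_mem[OF i]] by blast
  qed
  ultimately show ?case using R L by (auto simp: in_set_conv_nth)
qed

lemma ref_refl: "dary d V \<Longrightarrow> ref d V V"
proof (induction V)
  case Lf
  then show ?case by simp
next
  case (Nd ts)
  then show ?case by (auto intro: list.rel_refl_strong)
qed

lemma ref_trans: "ref d A B \<Longrightarrow> ref d B C \<Longrightarrow> ref d A C"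
proof (induction C arbitrary: A B)
  case Lf
  then show ?case using ref_dary by auto
next
  case (Nd cs)
  then obtain bs where B: "B = Nd bs" by (cases B) auto
  with Nd.prems obtain as where A: "A = Nd as" by (cases A) auto
  from Nd.prems A B have L: "list_all2 (ref d) as bs" "list_all2 (ref d) bs cs" "length cs = d" by auto
  have "list_all2 (ref d) as cs"
    using L Nd.IH by (auto simp: list_all2_conv_all_nth)
  then show ?case using A L by simp
qed

lemma sum_list_le_rel: "list_all2 (\<lambda>r v. f v \<le> (f r::nat)) rs vs \<Longrightarrow> sum_list (map f vs) \<le> sum_list (map f rs)"
  by (induction rule: list_all2_induct) auto

lemma ref_leaves: assumes d1: "d \<ge> 1" shows "ref d R V \<Longrightarrow> leaves V \<le> leaves R"
proof (induction V arbitrary: R)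
  case Lf
  then show ?case using leaves_pos[OF d1] by simp
next
  case (Nd vs)
  then obtain rs where R: "R = Nd rs" by (cases R) auto
  with Nd.prems have L: "list_all2 (ref d) rs vs" by auto
  have "list_all2 (\<lambda>r v. leaves v \<le> leaves r) rs vs"
    using L Nd.IH by (auto simp: list_all2_conv_all_nth)
  then show ?case using R sum_list_le_rel by fastforce
qed

lemma ref_add_caret:
  assumes d1: "d \<ge> 1"
  shows "dary d V \<Longrightarrow> 1 \<le> k \<Longrightarrow> k \<le> leaves V \<Longrightarrow>
    ref d R (add_caret d k V) = (ref d R V \<and> sub R V k \<noteq> Lf)"
proof (induction V arbitrary: k R)
  case Lf
  then show ?case by (cases R) (auto simp: list_all2_replicate_right)
next
  case (Nd vs)
  have LC: "(\<forall>v\<in>set vs. dary d v) \<Longrightarrow> 1 \<le> k \<Longrightarrow> k \<le> sum_list (map leaves vs) \<Longrightarrow>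
     list_all2 (ref d) rs (add_caret_list d k vs) = (list_all2 (ref d) rs vs \<and> subl rs vs k \<noteq> Lf)" for rs k
    using Nd.IH
  proof (induction vs arbitrary: rs k)
    case Nil
    then show ?case by simp
  next
    case (Cons v vs)
    have dv: "dary d v" using Cons.prems(1) by simp
    have IHt: "ref d r (add_caret d k' v) = (ref d r v \<and> sub r v k' \<noteq> Lf)"
      if "1 \<le> k'" "k' \<le> leaves v" for k' r
      using Cons.prems(4)[of v k' r] dv that by simp
    show ?case
    proof (cases rs)
      case Nil
      then show ?thesis by simp
    next
      case (Cons r rs0)
      show ?thesis
      proof (cases "k \<le> leaves v")
        case True
        then show ?thesis using Cons IHt[of k r] Cons.prems(2) by auto
      next
        case False
        have IH: "list_all2 (ref d) rs0 (add_caret_list d (k - leaves v) vs) =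
           (list_all2 (ref d) rs0 vs \<and> subl rs0 vs (k - leaves v) \<noteq> Lf)"
          apply (rule Cons.IH)
          using Cons.prems False by auto
        then show ?thesis using Cons False by auto
      qed
    qed
  qed
  show ?case
  proof (cases R)
    case Lf
    then show ?thesis by simp
  next
    case (Nd rs)
    then show ?thesis using LC[of k rs] Nd.prems by auto
  qed
qed

lemma sub_add_caret:
  assumes d1: "d \<ge> 1"
  shows "dary d V \<Longrightarrow> 1 \<le> k \<Longrightarrow> k \<le> leaves V \<Longrightarrow> 1 \<le> l \<Longrightarrow> l \<le> leaves V \<Longrightarrow> l \<noteq> k \<Longrightarrow>
    sub R (add_caret d k V) (if l < k then l else l + d - 1) = sub R V l"
proof (induction V arbitrary: k l R)
  case Lf
  then show ?case by simp
next
  case (Nd vs)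
  have LC: "(\<forall>v\<in>set vs. dary d v) \<Longrightarrow> 1 \<le> k \<Longrightarrow> k \<le> sum_list (map leaves vs) \<Longrightarrow>
     1 \<le> l \<Longrightarrow> l \<le> sum_list (map leaves vs) \<Longrightarrow> l \<noteq> k \<Longrightarrow>
     subl rs (add_caret_list d k vs) (if l < k then l else l + d - 1) = subl rs vs l" for rs k l
    using Nd.IH
  proof (induction vs arbitrary: rs k l)
    case Nil
    then show ?case by simp
  next
    case (Cons v vs)
    have dv: "dary d v" using Cons.prems(1) by simp
    have lv1: "1 \<le> leaves v" using leaves_pos[OF d1 dv] .
    have IHt: "sub r (add_caret d k' v) (if l' < k' then l' else l' + d - 1) = sub r v l'"
      if "1 \<le> k'" "k' \<le> leaves v" "1 \<le> l'" "l' \<le> leaves v" "l' \<noteq> k'" for k' l' r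
      using Cons.prems(7)[of v k' l' r] dv that by simp
    have lk: "leaves (add_caret d k' v) = leaves v + d - 1" if "1 \<le> k'" "k' \<le> leaves v" for k'
      using add_caret_props[OF d1 dv that] by simp
    show ?case
    proof (cases rs)
      case Nil
      then show ?thesis by (cases "add_caret_list d k (v # vs)") simp_all
    next
      case (Cons r rs0)
      show ?thesis
      proof (cases "k \<le> leaves v")
        case k: True
        show ?thesis
        proof (cases "l \<le> leaves v")
          case True
          have "(if l < k then l else l + d - 1) \<le> leaves v + d - 1" using True d1 by auto
          then show ?thesis using Cons k True IHt[of k l r] lk[of k] Cons.prems by auto
        next
          case False
          have "\<not> l + d - 1 \<le> leaves v + d - 1" "\<not> l < k" using False k d1 by auto
          moreover have "l + d - 1 - (leaves v + d - 1) = l - leaves v" using False d1 by auto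
          ultimately show ?thesis using Cons k False lk[of k] Cons.prems by auto
        qed
      next
        case k: False
        show ?thesis
        proof (cases "l \<le> leaves v")
          case True
          then show ?thesis using Cons k by auto
        next
          case False
          have IH: "subl rs0 (add_caret_list d (k - leaves v) vs)
             (if l - leaves v < k - leaves v then l - leaves v else l - leaves v + d - 1)
             = subl rs0 vs (l - leaves v)"
            apply (rule Cons.IH)
            using Cons.prems False k by auto
          have e: "(if l < k then l else l + d - 1) - leaves v =
             (if l - leaves v < k - leaves v then l - leaves v else l - leaves v + d - 1)"
            "\<not> (if l < k then l else l + d - 1) \<le> leaves v"
            using False k d1 by auto
          show ?thesis using IH Cons k False e by simp
        qed
      qed
    qed
  qed
  show ?case
  proof (cases R)
    case Lf
    then show ?thesis by simp
  next
    case (Nd rs)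
    then show ?thesis using LC[of k l rs] Nd.prems by auto
  qed
qed

lemma ref_neq_sub:
  assumes d1: "d \<ge> 1"
  shows "ref d R V \<Longrightarrow> R \<noteq> V \<Longrightarrow> \<exists>k. 1 \<le> k \<and> k \<le> leaves V \<and> sub R V k \<noteq> Lf"
proof (induction V arbitrary: R)
  case Lf
  then show ?case by (intro exI[of _ 1]) simp
next
  case (Nd vs)
  then obtain rs where R: "R = Nd rs" by (cases R) auto
  with Nd.prems have L: "list_all2 (ref d) rs vs" "rs \<noteq> vs" by auto
  have LC: "list_all2 (ref d) rs vs \<Longrightarrow> rs \<noteq> vs \<Longrightarrow> \<exists>k. 1 \<le> k \<and> k \<le> sum_list (map leaves vs) \<and> subl rs vs k \<noteq> Lf"
    using Nd.IH
  proof (induction vs arbitrary: rs)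
    case Nil
    then show ?case by simp
  next
    case (Cons v vs)
    then obtain r rs0 where rs: "rs = r # rs0" by (cases rs) auto
    have rv: "ref d r v" "list_all2 (ref d) rs0 vs" using Cons.prems rs by auto
    show ?case
    proof (cases "r = v")
      case False
      then obtain k where "1 \<le> k" "k \<le> leaves v" "sub r v k \<noteq> Lf" using Cons.prems(3)[of v r] rv by auto
      then show ?thesis using rs by (intro exI[of _ k]) auto
    next
      case True
      then have "rs0 \<noteq> vs" using Cons.prems rs by auto
      then obtain k where k: "1 \<le> k" "k \<le> sum_list (map leaves vs)" "subl rs0 vs k \<noteq> Lf"
        using Cons.IH[of rs0] rv Cons.prems(3) by auto
      have "\<not> k + leaves v \<le> leaves v" using k by auto
      then show ?thesis using rs k by (intro exI[of _ "k + leaves v"]) auto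
    qed
  qed
  from LC[OF L] R show ?case by simp
qed

lemma ref_caret: "d \<ge> 1 \<Longrightarrow> dary d V \<Longrightarrow> 1 \<le> k \<Longrightarrow> k \<le> leaves V \<Longrightarrow> ref d (add_caret d k V) V"
  using ref_add_caret[of d V k "add_caret d k V"] ref_refl[of d "add_caret d k V"] add_caret_props[of d V k]
  by auto

lemma ref_TL:
  assumes d1: "d \<ge> 1" and dU: "dary d U" and kl: "1 \<le> k" "k < l" "l \<le> leaves U"
    and r1: "ref d R (add_caret d k U)" and r2: "ref d R (add_caret d l U)"
  shows "ref d R (add_caret d (l + d - 1) (add_caret d k U))"
proof -
  have A: "sub R U l \<noteq> Lf" using ref_add_caret[OF d1 dU, of l R] r2 kl by auto
  have P: "dary d (add_caret d k U)" "leaves (add_caret d k U) = leaves U + d - 1"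
    using add_caret_props[OF d1 dU, of k] kl by auto
  have "sub R (add_caret d k U) (l + d - 1) = sub R U l"
    using sub_add_caret[OF d1 dU, of k l R] kl by auto
  then show ?thesis using ref_add_caret[OF d1 P(1), of "l + d - 1" R] P(2) kl r1 A by auto
qed

abbreviation rt :: "'a \<times> 'b \<times> 'c \<Rightarrow> 'c" where "rt t \<equiv> snd (snd t)"

locale CS =
  fixes d :: nat and G :: "nat \<Rightarrow> 'g monoid" and rho :: "nat \<Rightarrow> 'g \<Rightarrow> nat \<Rightarrow> nat"
    and kappa :: "nat \<Rightarrow> nat \<Rightarrow> 'g \<Rightarrow> 'g"
  assumes d2: "d \<ge> 2" and cs: "cloning_system d G rho kappa"
begin

lemma d1: "d \<ge> 1" using d2 by simp

lemma grp: "n \<ge> 1 \<Longrightarrow> group (G n)"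
  using cs unfolding cloning_system_def by (elim conjE) simp
lemma rho_hom: "n \<ge> 1 \<Longrightarrow> rho n \<in> hom (G n) (sym_group n)"
  using cs unfolding cloning_system_def by (elim conjE) simp
lemma csD1:
  "\<forall>n\<ge>1. \<forall>k\<in>{1..n}. kappa n k \<in> carrier (G n) \<rightarrow> carrier (G (n + d - 1)) \<and> inj_on (kappa n k) (carrier (G n))"
  using cs unfolding cloning_system_def by (elim conjE) assumption

lemma csD2:
  "\<forall>n\<ge>1. \<forall>k\<in>{1..n}. \<forall>g\<in>carrier (G n). \<forall>h\<in>carrier (G n).
          kappa n k (g \<otimes>\<^bsub>G n\<^esub> h) = kappa n (rho n h k) g \<otimes>\<^bsub>G (n + d - 1)\<^esub> kappa n k h"
  using cs unfolding cloning_system_def by (elim conjE) assumption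

lemma csD3:
  "\<forall>n\<ge>1. \<forall>k l. 1 \<le> k \<and> k < l \<and> l \<le> n \<longrightarrow>
        (\<forall>g\<in>carrier (G n). kappa (n + d - 1) k (kappa n l g) = kappa (n + d - 1) (l + d - 1) (kappa n k g))"
  using cs unfolding cloning_system_def by (elim conjE) assumption

lemma csD4:
  "\<forall>n\<ge>1. \<forall>k\<in>{1..n}. \<forall>g\<in>carrier (G n). \<forall>i\<in>{1..n + d - 1}.
        i \<notin> {k..k + d - 1} \<longrightarrow> rho (n + d - 1) (kappa n k g) i = clone_perm d n k (rho n g) i"
  using cs unfolding cloning_system_def by (elim conjE) assumption

lemma kappa_closed: "n \<ge> 1 \<Longrightarrow> 1 \<le> k \<Longrightarrow> k \<le> n \<Longrightarrow> g \<in> carrier (G n) \<Longrightarrow> kappa n k g \<in> carrier (G (n + d - 1))"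
  using csD1 by (meson Pi_mem atLeastAtMost_iff)
lemma kappa_inj: "n \<ge> 1 \<Longrightarrow> 1 \<le> k \<Longrightarrow> k \<le> n \<Longrightarrow> inj_on (kappa n k) (carrier (G n))"
  using csD1 by (meson atLeastAtMost_iff)
lemma C1: "n \<ge> 1 \<Longrightarrow> 1 \<le> k \<Longrightarrow> k \<le> n \<Longrightarrow> g \<in> carrier (G n) \<Longrightarrow> h \<in> carrier (G n) \<Longrightarrow>
   kappa n k (g \<otimes>\<^bsub>G n\<^esub> h) = kappa n (rho n h k) g \<otimes>\<^bsub>G (n + d - 1)\<^esub> kappa n k h"
  using csD2 by (meson atLeastAtMost_iff)
lemma C2: "n \<ge> 1 \<Longrightarrow> 1 \<le> k \<Longrightarrow> k < l \<Longrightarrow> l \<le> n \<Longrightarrow> g \<in> carrier (G n) \<Longrightarrow>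
   kappa (n + d - 1) k (kappa n l g) = kappa (n + d - 1) (l + d - 1) (kappa n k g)"
  using csD3 by blast
lemma C3: "n \<ge> 1 \<Longrightarrow> 1 \<le> k \<Longrightarrow> k \<le> n \<Longrightarrow> g \<in> carrier (G n) \<Longrightarrow> 1 \<le> i \<Longrightarrow> i \<le> n + d - 1 \<Longrightarrow>
   \<not> (k \<le> i \<and> i \<le> k + d - 1) \<Longrightarrow> rho (n + d - 1) (kappa n k g) i = clone_perm d n k (rho n g) i"
  using csD4 by (meson atLeastAtMost_iff)

lemma rho_perm: "n \<ge> 1 \<Longrightarrow> g \<in> carrier (G n) \<Longrightarrow> rho n g permutes {1..n}"
  using rho_hom[of n] by (auto simp: hom_def sym_group_carrier)

lemma rho_range: "n \<ge> 1 \<Longrightarrow> g \<in> carrier (G n) \<Longrightarrow> 1 \<le> k \<Longrightarrow> k \<le> n \<Longrightarrow> 1 \<le> rho n g k \<and> rho n g k \<le> n"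
  using permutes_in_image[OF rho_perm, of n g k] by auto

lemma rho_mult: "n \<ge> 1 \<Longrightarrow> g \<in> carrier (G n) \<Longrightarrow> h \<in> carrier (G n) \<Longrightarrow>
   rho n (g \<otimes>\<^bsub>G n\<^esub> h) = rho n g \<circ> rho n h"
  using hom_mult[OF rho_hom] by (simp add: sym_group_mult)

lemma rho_one: "n \<ge> 1 \<Longrightarrow> rho n \<one>\<^bsub>G n\<^esub> = id"
  using hom_one[OF rho_hom grp sym_group_is_group] by (simp add: sym_group_one)

lemma kappa_one: assumes "n \<ge> 1" "1 \<le> k" "k \<le> n" shows "kappa n k \<one>\<^bsub>G n\<^esub> = \<one>\<^bsub>G (n + d - 1)\<^esub>"
proof -
  interpret Gn: group "G n" using grp assms by simp
  interpret Gm: group "G (n + d - 1)" using grp[of "n + d - 1"] assms d1 by simp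
  have c: "kappa n k \<one>\<^bsub>G n\<^esub> \<in> carrier (G (n + d - 1))" using kappa_closed assms by simp
  have "kappa n k \<one>\<^bsub>G n\<^esub> = kappa n k \<one>\<^bsub>G n\<^esub> \<otimes>\<^bsub>G (n + d - 1)\<^esub> kappa n k \<one>\<^bsub>G n\<^esub>"
    using C1[of n k "\<one>\<^bsub>G n\<^esub>" "\<one>\<^bsub>G n\<^esub>"] assms rho_one by simp
  then show ?thesis using c by (metis Gm.l_cancel_one')
qed

abbreviation E where "E \<equiv> expansion d G rho kappa"
abbreviation S where "S \<equiv> E \<union> E\<inverse>"
abbreviation valid where "valid \<equiv> valid_triple d G"

definition ex :: "tree \<times> 'g \<times> tree \<Rightarrow> nat \<Rightarrow> tree \<times> 'g \<times> tree" where
  "ex t k = (case t of (T, g, U) \<Rightarrow>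
     (add_caret d (rho (leaves T) g k) T, kappa (leaves T) k g, add_caret d k U))"

lemma ex_simp [simp]: "ex (T, g, U) k = (add_caret d (rho (leaves T) g k) T, kappa (leaves T) k g, add_caret d k U)"
  by (simp add: ex_def)

lemma E_iff: "(t, s) \<in> E \<longleftrightarrow> valid t \<and> (\<exists>k. 1 \<le> k \<and> k \<le> leaves (fst t) \<and> s = ex t k)"
  unfolding expansion_def by (cases t) auto

lemma valid_D: "valid (T, g, U) \<Longrightarrow> dary d T \<and> dary d U \<and> leaves T = leaves U \<and> g \<in> carrier (G (leaves T)) \<and> leaves T \<ge> 1"
  unfolding valid_triple_def using leaves_pos[OF d1] by auto

lemma valid_ex:
  assumes v: "valid (T, g, U)" and k: "1 \<le> k" "k \<le> leaves T"
  shows "valid (ex (T, g, U) k)" "leaves (add_caret d (rho (leaves T) g k) T) = leaves T + d - 1"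
    "leaves (add_caret d k U) = leaves T + d - 1"
proof -
  note V = valid_D[OF v]
  have r: "1 \<le> rho (leaves T) g k" "rho (leaves T) g k \<le> leaves T" using rho_range V k by auto
  note A = add_caret_props[OF d1 conjunct1[OF V] r]
  note B = add_caret_props[OF d1 conjunct1[OF conjunct2[OF V]], of k]
  show "leaves (add_caret d (rho (leaves T) g k) T) = leaves T + d - 1" using A by simp
  show "leaves (add_caret d k U) = leaves T + d - 1" using B V k by simp
  show "valid (ex (T, g, U) k)"
    using A B V k kappa_closed[of "leaves T" k g] unfolding valid_triple_def by auto
qed

lemma E_ex: "valid t \<Longrightarrow> 1 \<le> k \<Longrightarrow> k \<le> leaves (fst t) \<Longrightarrow> (t, ex t k) \<in> E"
  unfolding E_iff by blast

lemma E_valid: assumes "(t, s) \<in> E" shows "valid t \<and> valid s"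
proof -
  obtain k where k: "valid t" "1 \<le> k" "k \<le> leaves (fst t)" "s = ex t k" using assms unfolding E_iff by blast
  obtain T g U where t: "t = (T, g, U)" by (cases t)
  show ?thesis using k valid_ex(1)[of T g U k] t by simp
qed

lemma diamond_ex:
  assumes v: "valid (T, g, U)" and kl: "1 \<le> k" "k < l" "l \<le> leaves T"
  shows "ex (ex (T, g, U) k) (l + d - 1) = ex (ex (T, g, U) l) k"
proof -
  define n where "n = leaves T"
  note V = valid_D[OF v]
  have n1: "n \<ge> 1" using V n_def by simp
  define a where "a = rho n g k"
  define b where "b = rho n g l"
  have ra: "1 \<le> a" "a \<le> n" using rho_range[OF n1, of g k] V kl a_def n_def by auto
  have rb: "1 \<le> b" "b \<le> n" using rho_range[OF n1, of g l] V kl b_def n_def by auto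
  have ab: "a \<noteq> b"
    using permutes_inj[OF rho_perm[OF n1, of g]] V kl a_def b_def n_def by (auto dest: injD)
  have la: "leaves (add_caret d a T) = n + d - 1" using valid_ex(2)[OF v, of k] kl a_def n_def by simp
  have lb: "leaves (add_caret d b T) = n + d - 1" using valid_ex(2)[OF v, of l] kl b_def n_def by simp
  have g: "g \<in> carrier (G n)" using V unfolding n_def by blast
  have b1: "blk d k (l + d - 1) = l" "blk_off d k (l + d - 1) = 0" using kl d1 by (auto simp: blk_def blk_off_def)
  have b2: "blk d l k = k" "blk_off d l k = 0" using kl d1 by (auto simp: blk_def blk_off_def)
  have c1: "rho (n + d - 1) (kappa n k g) (l + d - 1) = clone_perm d n k (rho n g) (l + d - 1)"
    apply (rule C3[OF n1]) using kl n_def g d1 by auto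
  have c2: "rho (n + d - 1) (kappa n l g) k = clone_perm d n l (rho n g) k"
    apply (rule C3[OF n1]) using kl n_def g d1 by auto
  have r1: "rho (n + d - 1) (kappa n k g) (l + d - 1) = (if b \<le> a then b else b + d - 1)"
  proof -
    have "l + d - 1 \<in> {1..n + d - 1}" using kl n_def d1 by auto
    then show ?thesis unfolding c1 clone_perm_def using b1 d1 by (simp add: blk_start_def a_def b_def)
  qed
  have r2: "rho (n + d - 1) (kappa n l g) k = (if a \<le> b then a else a + d - 1)"
  proof -
    have "k \<in> {1..n + d - 1}" using kl n_def d1 by auto
    then show ?thesis unfolding c2 clone_perm_def using b2 d1 by (simp add: blk_start_def a_def b_def)
  qed
  have left: "add_caret d (if b \<le> a then b else b + d - 1) (add_caret d a T) =
              add_caret d (if a \<le> b then a else a + d - 1) (add_caret d b T)"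
  proof (cases "a < b")
    case True
    then show ?thesis using add_caret_comm[OF d1 conjunct1[OF V], of a b] ra rb n_def by simp
  next
    case False
    then have "b < a" using ab by simp
    then show ?thesis using add_caret_comm[OF d1 conjunct1[OF V], of b a] ra rb n_def by simp
  qed
  have right: "add_caret d (l + d - 1) (add_caret d k U) = add_caret d k (add_caret d l U)"
    using add_caret_comm[OF d1 conjunct1[OF conjunct2[OF V]], of k l] kl V by simp
  have mid: "kappa (n + d - 1) k (kappa n l g) = kappa (n + d - 1) (l + d - 1) (kappa n k g)"
    using C2[OF n1 kl(1,2) _ g] kl n_def by simp
  show ?thesis
    using left right mid r1 r2 la lb unfolding n_def[symmetric] a_def[symmetric] b_def[symmetric]
    by (simp add: n_def[symmetric] a_def[symmetric] b_def[symmetric])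
qed

lemma valid_leaves: "valid t \<Longrightarrow> leaves (fst t) = leaves (rt t) \<and> dary d (fst t) \<and> dary d (rt t) \<and> leaves (fst t) \<ge> 1"
  using valid_D[of "fst t" "fst (snd t)" "rt t"] by simp

lemma E_leaves:
  assumes "(t, s) \<in> E"
  shows "leaves (fst s) = leaves (fst t) + d - 1 \<and> leaves (rt s) = leaves (rt t) + d - 1 \<and> ref d (rt s) (rt t)"
proof -
  obtain k where k: "valid t" "1 \<le> k" "k \<le> leaves (fst t)" "s = ex t k" using assms unfolding E_iff by blast
  obtain T g U where t: "t = (T, g, U)" by (cases t)
  note V = valid_D[of T g U]
  show ?thesis using k t valid_ex(2,3)[of T g U k] V ref_caret[OF d1, of U k] by simp
qed

lemma Es_valid: "(t, s) \<in> E\<^sup>* \<Longrightarrow> valid t \<Longrightarrow> valid s"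
  by (induction rule: rtrancl_induct) (auto dest: E_valid)

lemma Es_ref: "(t, s) \<in> E\<^sup>* \<Longrightarrow> valid t \<Longrightarrow> ref d (rt s) (rt t)"
proof (induction rule: rtrancl_induct)
  case base
  then show ?case using valid_leaves ref_refl by blast
next
  case (step s s')
  then show ?case using E_leaves[OF step(2)] ref_trans by blast
qed

lemma Es_leaves: "(t, s) \<in> E\<^sup>* \<Longrightarrow> valid t \<Longrightarrow> leaves (rt t) \<le> leaves (rt s)"
  using Es_ref ref_leaves[OF d1] by blast

lemma lift_right_aux:
  "\<forall>t. leaves R - leaves (rt t) = N \<longrightarrow> valid t \<longrightarrow> ref d R (rt t) \<longrightarrow> (\<exists>s. (t, s) \<in> E\<^sup>* \<and> rt s = R)"
proof (induction N rule: less_induct)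
  case (less N)
  show ?case
  proof (intro allI impI)
    fix t assume N: "leaves R - leaves (rt t) = N" and v: "valid t" and r: "ref d R (rt t)"
    show "\<exists>s. (t, s) \<in> E\<^sup>* \<and> rt s = R"
    proof (cases "R = rt t")
      case True
      then show ?thesis by blast
    next
      case False
      obtain T g U where t: "t = (T, g, U)" by (cases t)
      note V = valid_D[OF v[unfolded t]]
      obtain k where k: "1 \<le> k" "k \<le> leaves U" "sub R U k \<noteq> Lf"
        using ref_neq_sub[OF d1 r False] t by auto
      have r1: "ref d R (add_caret d k U)" using ref_add_caret[OF d1, of U k R] V k r t by simp
      have E1: "(t, ex t k) \<in> E" using E_ex[OF v, of k] k V t by simp
      have l1: "leaves (add_caret d k U) = leaves U + d - 1" using valid_ex(3)[of T g U k] v t k V by simp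
      have l2: "leaves (add_caret d k U) \<le> leaves R" using ref_leaves[OF d1 r1] .
      have lt: "leaves R - leaves (rt (ex t k)) < N" using N l1 l2 t d2 by simp
      have "\<exists>s. (ex t k, s) \<in> E\<^sup>* \<and> rt s = R"
        apply (rule less.IH[OF lt, rule_format])
        using E_valid[OF E1] r1 t by auto
      then obtain s where s: "(ex t k, s) \<in> E\<^sup>*" "rt s = R" by blast
      have "(t, s) \<in> E\<^sup>*" using E1 s(1) by (rule converse_rtrancl_into_rtrancl)
      with s(2) show ?thesis by blast
    qed
  qed
qed

lemma lift_right: "valid t \<Longrightarrow> ref d R (rt t) \<Longrightarrow> \<exists>s. (t, s) \<in> E\<^sup>* \<and> rt s = R"
  using lift_right_aux by blast

lemma E_grow: "(t, s) \<in> E \<Longrightarrow> (s, u) \<in> E\<^sup>* \<Longrightarrow> leaves (rt t) < leaves (rt u)"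
  using E_leaves[of t s] Es_leaves[of s u] E_valid[of t s] d2 by fastforce

lemma uniq_aux:
  "\<forall>t t1 t2. leaves (rt t1) - leaves (rt t) = N \<longrightarrow> valid t \<longrightarrow> (t, t1) \<in> E\<^sup>* \<longrightarrow> (t, t2) \<in> E\<^sup>* \<longrightarrow>
     rt t1 = rt t2 \<longrightarrow> t1 = t2"
proof (induction N rule: less_induct)
  case (less N)
  show ?case
  proof (intro allI impI)
    fix t t1 t2
    assume N: "leaves (rt t1) - leaves (rt t) = N" and v: "valid t" and p1: "(t, t1) \<in> E\<^sup>*"
      and p2: "(t, t2) \<in> E\<^sup>*" and eq: "rt t1 = rt t2"
    obtain T g U where t: "t = (T, g, U)" by (cases t)
    note V = valid_D[OF v[unfolded t]]
    have key: "t1' = t2'" if kl: "1 \<le> k" "k < l" "l \<le> leaves T" and q1: "(ex t k, t1') \<in> E\<^sup>*"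
      and q2: "(ex t l, t2') \<in> E\<^sup>*" and eq': "rt t1' = rt t2'" and N': "leaves (rt t1') = leaves (rt t1)" for k l t1' t2'
    proof -
      define u where "u = ex (ex t k) (l + d - 1)"
      have u2: "u = ex (ex t l) k" using diamond_ex[OF v[unfolded t] kl] t u_def by simp
      have E1: "(t, ex t k) \<in> E" "(t, ex t l) \<in> E" using E_ex[OF v] kl t by auto
      have v1: "valid (ex t k)" "valid (ex t l)" using E_valid E1 by auto
      have lk: "leaves (fst (ex t k)) = leaves T + d - 1" "leaves (fst (ex t l)) = leaves T + d - 1"
        using valid_ex(2)[of T g U] v t kl by auto
      have Eu1: "(ex t k, u) \<in> E" unfolding u_def using E_ex[OF v1(1), of "l + d - 1"] lk kl d1 by simp
      have Eu2: "(ex t l, u) \<in> E" unfolding u2 using E_ex[OF v1(2), of k] lk kl d1 by simp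
      have R1: "ref d (rt t1') (add_caret d k U)" using Es_ref[OF q1 v1(1)] t by simp
      have R2: "ref d (rt t1') (add_caret d l U)" using Es_ref[OF q2 v1(2)] t eq' by simp
      have "ref d (rt t1') (add_caret d (l + d - 1) (add_caret d k U))"
        using ref_TL[OF d1 _ kl(1,2) _ R1 R2] V kl by simp
      then have Ru: "ref d (rt t1') (rt u)" unfolding u_def t by simp
      obtain t' where t': "(u, t') \<in> E\<^sup>*" "rt t' = rt t1'"
        using lift_right[OF _ Ru] E_valid[OF Eu1] by blast
      have m1: "leaves (rt t1') - leaves (rt (ex t k)) < N"
        using E_grow[OF E1(1) q1] E_grow[of t "ex t k" t1'] E1 q1 N N' E_leaves[OF E1(1)] d2 by simp
      have m2: "leaves (rt t2') - leaves (rt (ex t l)) < N"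
        using E_grow[OF E1(2) q2] N N' eq' E_leaves[OF E1(2)] E_leaves[OF E1(1)] d2 by simp
      have c1: "(ex t k, t') \<in> E\<^sup>*" using Eu1 t'(1) by (rule converse_rtrancl_into_rtrancl)
      have c2: "(ex t l, t') \<in> E\<^sup>*" using Eu2 t'(1) by (rule converse_rtrancl_into_rtrancl)
      have "t1' = t'"
        using spec[OF spec[OF spec[OF less.IH[OF m1], of "ex t k"], of t1'], of t'] v1(1) q1 c1 t'(2) by simp
      moreover have "t2' = t'"
        using spec[OF spec[OF spec[OF less.IH[OF m2], of "ex t l"], of t2'], of t'] v1(2) q2 c2 t'(2) eq' by simp
      ultimately show ?thesis by simp
    qed
    show "t1 = t2"
    proof (cases "t1 = t")
      case True
      show ?thesis
      proof (rule ccontr)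
        assume "t1 \<noteq> t2"
        then obtain s where "(t, s) \<in> E" "(s, t2) \<in> E\<^sup>*" using p2 True
          by (metis converse_rtranclE)
        then show False using E_grow True eq by fastforce
      qed
    next
      case False
      then obtain s1 where s1: "(t, s1) \<in> E" "(s1, t1) \<in> E\<^sup>*" using p1 by (metis converse_rtranclE)
      have "t2 \<noteq> t" using E_grow[OF s1] eq by fastforce
      then obtain s2 where s2: "(t, s2) \<in> E" "(s2, t2) \<in> E\<^sup>*" using p2 by (metis converse_rtranclE)
      obtain k where k: "1 \<le> k" "k \<le> leaves T" "s1 = ex t k" using s1(1) t unfolding E_iff by auto
      obtain l where l: "1 \<le> l" "l \<le> leaves T" "s2 = ex t l" using s2(1) t unfolding E_iff by auto
      consider "k < l" | "k = l" | "l < k" by linarith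
      then show ?thesis
      proof cases
        case 1
        then show ?thesis using key[of k l t1 t2] k l s1 s2 eq by simp
      next
        case 2
        have m: "leaves (rt t1) - leaves (rt s1) < N" using E_grow[OF s1] N E_leaves[OF s1(1)] d2 by simp
        have "s1 = s2" using k l 2 by simp
        then show ?thesis using spec[OF spec[OF spec[OF less.IH[OF m], of s1], of t1], of t2] E_valid[OF s1(1)] s1 s2 eq by blast
      next
        case 3
        then show ?thesis using key[of l k t2 t1] k l s1 s2 eq by simp
      qed
    qed
  qed
qed

lemma uniq_right: "valid t \<Longrightarrow> (t, t1) \<in> E\<^sup>* \<Longrightarrow> (t, t2) \<in> E\<^sup>* \<Longrightarrow> rt t1 = rt t2 \<Longrightarrow> t1 = t2"
  using uniq_aux by blast

lemma diamond: "(t, s1) \<in> E \<Longrightarrow> (t, s2) \<in> E \<Longrightarrow> s1 = s2 \<or> (\<exists>u. (s1, u) \<in> E \<and> (s2, u) \<in> E)"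
proof -
  assume a: "(t, s1) \<in> E" "(t, s2) \<in> E"
  obtain T g U where t: "t = (T, g, U)" by (cases t)
  obtain k where k: "valid t" "1 \<le> k" "k \<le> leaves T" "s1 = ex t k" using a(1) t unfolding E_iff by auto
  obtain l where l: "1 \<le> l" "l \<le> leaves T" "s2 = ex t l" using a(2) t unfolding E_iff by auto
  have v1: "valid (ex t k)" "valid (ex t l)" using E_valid a k l by auto
  have lk: "leaves (fst (ex t k)) = leaves T + d - 1" "leaves (fst (ex t l)) = leaves T + d - 1"
    using valid_ex(2)[of T g U] k l t by auto
  consider "k < l" | "k = l" | "l < k" by linarith
  then show ?thesis
  proof cases
    case 1
    have "(ex t k, ex (ex t k) (l + d - 1)) \<in> E" using E_ex[OF v1(1), of "l + d - 1"] lk 1 l d1 by simp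
    moreover have "(ex t l, ex (ex t k) (l + d - 1)) \<in> E"
      using E_ex[OF v1(2), of k] lk 1 k d1 diamond_ex[of T g U k l] t l by simp
    ultimately show ?thesis using k l by blast
  next
    case 2
    then show ?thesis using k l by simp
  next
    case 3
    have "(ex t l, ex (ex t l) (k + d - 1)) \<in> E" using E_ex[OF v1(2), of "k + d - 1"] lk 3 k d1 by simp
    moreover have "(ex t k, ex (ex t l) (k + d - 1)) \<in> E"
      using E_ex[OF v1(1), of l] lk 3 l d1 diamond_ex[of T g U l k] t k by simp
    ultimately show ?thesis using k l by blast
  qed
qed

lemma strip: assumes xy: "(x, y) \<in> E" and xz: "(x, z) \<in> E\<^sup>*" shows "\<exists>w. (y, w) \<in> E\<^sup>* \<and> (z, w) \<in> E\<^sup>="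
  using xz
proof (induction z rule: rtrancl_induct)
  case base
  then show ?case using xy by blast
next
  case (step z z')
  then obtain w where w: "(y, w) \<in> E\<^sup>*" "(z, w) \<in> E\<^sup>=" by blast
  show ?case
  proof (cases "z = w")
    case True
    then show ?thesis using w step(2) by (meson UnI2 pair_in_Id_conv rtrancl.rtrancl_into_rtrancl)
  next
    case False
    then have "(z, w) \<in> E" using w by blast
    from diamond[OF this step(2)] show ?thesis
    proof
      assume "w = z'" then show ?thesis using w by blast
    next
      assume "\<exists>u. (w, u) \<in> E \<and> (z', u) \<in> E"
      then obtain u where "(w, u) \<in> E" "(z', u) \<in> E" by blast
      then show ?thesis using w by (meson UnI1 rtrancl.rtrancl_into_rtrancl)
    qed
  qed
qed

lemma confl: assumes xy: "(x, y) \<in> E\<^sup>*" and xz: "(x, z) \<in> E\<^sup>*" shows "\<exists>w. (y, w) \<in> E\<^sup>* \<and> (z, w) \<in> E\<^sup>*"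
  using xy
proof (induction y rule: rtrancl_induct)
  case base
  then show ?case using xz by blast
next
  case (step y y')
  then obtain w where w: "(y, w) \<in> E\<^sup>*" "(z, w) \<in> E\<^sup>*" by blast
  obtain w' where "(y', w') \<in> E\<^sup>*" "(w, w') \<in> E\<^sup>=" using strip[OF step(2) w(1)] by blast
  then show ?case using w(2) by (metis Un_iff pair_in_Id_conv rtrancl.rtrancl_into_rtrancl)
qed

lemma CR: "(a, b) \<in> S\<^sup>* \<Longrightarrow> \<exists>c. (a, c) \<in> E\<^sup>* \<and> (b, c) \<in> E\<^sup>*"
proof (induction b rule: rtrancl_induct)
  case base
  then show ?case by blast
next
  case (step b b')
  then obtain c where c: "(a, c) \<in> E\<^sup>*" "(b, c) \<in> E\<^sup>*" by blast
  show ?case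
  proof (cases "(b, b') \<in> E")
    case True
    then obtain w where "(c, w) \<in> E\<^sup>*" "(b', w) \<in> E\<^sup>*" using confl[OF c(2)] by blast
    then show ?thesis using c by (meson rtrancl_trans)
  next
    case False
    then have "(b', b) \<in> E" using step(2) by blast
    then show ?thesis using c by (meson converse_rtrancl_into_rtrancl)
  qed
qed

definition tprod :: "tree \<times> 'g \<times> tree \<Rightarrow> tree \<times> 'g \<times> tree \<Rightarrow> tree \<times> 'g \<times> tree" where
  "tprod a b = (fst a, fst (snd a) \<otimes>\<^bsub>G (leaves (fst a))\<^esub> fst (snd b), rt b)"

definition tinvt :: "tree \<times> 'g \<times> tree \<Rightarrow> tree \<times> 'g \<times> tree" where
  "tinvt t = (rt t, inv\<^bsub>G (leaves (fst t))\<^esub> (fst (snd t)), fst t)"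

lemma valid_tprod: assumes va: "valid a" and vb: "valid b" and m: "rt a = fst b" shows "valid (tprod a b)"
proof -
  obtain T g U where a: "a = (T, g, U)" by (cases a)
  obtain U' h W where b: "b = (U', h, W)" by (cases b)
  have U': "U' = U" using m a b by simp
  have A: "dary d T" "dary d U" "leaves T = leaves U" "g \<in> carrier (G (leaves T))" "leaves T \<ge> 1"
    using valid_D[of T g U] va a by auto
  have B: "dary d W" "leaves U = leaves W" "h \<in> carrier (G (leaves U))"
    using valid_D[of U h W] vb b U' by auto
  have h: "h \<in> carrier (G (leaves T))" using B(3) A(3) by simp
  have gh: "g \<otimes>\<^bsub>G (leaves T)\<^esub> h \<in> carrier (G (leaves T))"
    using group.subgroupE(4)[OF grp[OF A(5)] group.subgroup_self[OF grp[OF A(5)]] A(4) h] .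
  have "tprod a b = (T, g \<otimes>\<^bsub>G (leaves T)\<^esub> h, W)" by (simp add: tprod_def a b)
  then show ?thesis using A B gh unfolding valid_triple_def by simp
qed

lemma valid_tinvt: assumes v: "valid t" shows "valid (tinvt t)"
proof -
  obtain T g U where a: "t = (T, g, U)" by (cases t)
  have A: "dary d T" "dary d U" "leaves T = leaves U" "g \<in> carrier (G (leaves T))" "leaves T \<ge> 1"
    using valid_D[of T g U] v a by auto
  have gi: "inv\<^bsub>G (leaves T)\<^esub> g \<in> carrier (G (leaves T))"
    using group.inv_closed[OF grp[OF A(5)] A(4)] .
  have "tinvt t = (U, inv\<^bsub>G (leaves T)\<^esub> g, T)" by (simp add: tinvt_def a)
  then show ?thesis using A gi unfolding valid_triple_def by simp
qed

lemma pcore: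
  assumes va: "valid (T, g, U)" and vb: "valid (U, h, W)" and k: "1 \<le> k'" "k' \<le> leaves U"
  shows "tprod (ex (T, g, U) (rho (leaves U) h k')) (ex (U, h, W) k') = ex (T, g \<otimes>\<^bsub>G (leaves T)\<^esub> h, W) k'"
proof -
  note A = valid_D[OF va] and B = valid_D[OF vb]
  define n where "n = leaves T"
  have n1: "n \<ge> 1" using A n_def by simp
  have g: "g \<in> carrier (G n)" and h: "h \<in> carrier (G n)" using A B n_def by auto
  have lU: "leaves U = n" using A n_def by simp
  have j: "1 \<le> rho n h k'" "rho n h k' \<le> n" using rho_range[OF n1 h] k lU by auto
  have lj: "leaves (add_caret d (rho n g (rho n h k')) T) = n + d - 1"
    using valid_ex(2)[OF va, of "rho n h k'"] j n_def by simp
  have m: "rho n (g \<otimes>\<^bsub>G n\<^esub> h) k' = rho n g (rho n h k')" using rho_mult[OF n1 g h] by simp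
  have c: "kappa n k' (g \<otimes>\<^bsub>G n\<^esub> h) = kappa n (rho n h k') g \<otimes>\<^bsub>G (n + d - 1)\<^esub> kappa n k' h"
    using C1[OF n1 _ _ g h] k lU by simp
  show ?thesis unfolding tprod_def using lj m c lU by (simp add: n_def[symmetric])
qed

lemma lift_prod_left:
  assumes "(a, c) \<in> E\<^sup>*" "valid a" "valid b" "rt a = fst b"
  shows "\<exists>b'. (b, b') \<in> E\<^sup>* \<and> rt c = fst b' \<and> (tprod a b, tprod c b') \<in> E\<^sup>*"
  using assms(1)
proof (induction c rule: rtrancl_induct)
  case base
  then show ?case using assms by blast
next
  case (step c c1)
  then obtain b' where b': "(b, b') \<in> E\<^sup>*" "rt c = fst b'" "(tprod a b, tprod c b') \<in> E\<^sup>*" by blast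
  have vc: "valid c" using Es_valid step(1) assms(2) by blast
  have vb': "valid b'" using Es_valid b'(1) assms(3) by blast
  obtain T g U where c: "c = (T, g, U)" by (cases c)
  obtain U' h W where bb: "b' = (U', h, W)" by (cases b')
  have U': "U' = U" using b'(2) c bb by simp
  note A = valid_D[OF vc[unfolded c]] and B = valid_D[OF vb'[unfolded bb U']]
  define n where "n = leaves U"
  have n1: "n \<ge> 1" using B n_def by simp
  obtain k where k: "1 \<le> k" "k \<le> leaves T" "c1 = ex c k" using step(2) c unfolding E_iff by auto
  have "k \<in> rho n h ` {1..n}" using permutes_image[OF rho_perm[OF n1, of h]] B k A n_def by auto
  then obtain k' where k': "1 \<le> k'" "k' \<le> n" "rho n h k' = k" by auto
  have E1: "(b', ex b' k') \<in> E" using E_ex[OF vb', of k'] k' bb n_def U' by simp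
  have tp: "tprod c b' = (T, g \<otimes>\<^bsub>G (leaves T)\<^esub> h, W)" by (simp add: tprod_def c bb)
  have P: "tprod c1 (ex b' k') = ex (tprod c b') k'"
    unfolding tp using pcore[OF vc[unfolded c] vb'[unfolded bb U'] k'(1)] k' k c bb U' n_def by simp
  have vt: "valid (tprod c b')" using valid_tprod[OF vc vb' b'(2)] .
  have E2: "(tprod c b', ex (tprod c b') k') \<in> E"
    using E_ex[OF vt, of k'] k' A n_def c unfolding tprod_def by simp
  have r: "rt c1 = fst (ex b' k')" using k k' c bb U' n_def by simp
  have s1: "(b, ex b' k') \<in> E\<^sup>*" using b'(1) E1 by (rule rtrancl.rtrancl_into_rtrancl)
  have s2: "(tprod a b, ex (tprod c b') k') \<in> E\<^sup>*" using b'(3) E2 by (rule rtrancl.rtrancl_into_rtrancl)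
  show ?case
  proof (intro exI[of _ "ex b' k'"] conjI)
    show "(tprod a b, tprod c1 (ex b' k')) \<in> E\<^sup>*" unfolding P using s2 .
  qed (use s1 r in auto)
qed

lemma lift_prod_right:
  assumes "(b, f) \<in> E\<^sup>*" "valid a" "valid b" "rt a = fst b"
  shows "\<exists>a'. (a, a') \<in> E\<^sup>* \<and> rt a' = fst f \<and> (tprod a b, tprod a' f) \<in> E\<^sup>*"
  using assms(1)
proof (induction f rule: rtrancl_induct)
  case base
  then show ?case using assms by blast
next
  case (step f f1)
  then obtain a' where a': "(a, a') \<in> E\<^sup>*" "rt a' = fst f" "(tprod a b, tprod a' f) \<in> E\<^sup>*" by blast
  have vf: "valid f" using Es_valid step(1) assms(3) by blast
  have va': "valid a'" using Es_valid a'(1) assms(2) by blast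
  obtain U h W where ff: "f = (U, h, W)" by (cases f)
  obtain T g U' where aa: "a' = (T, g, U')" by (cases a')
  have U': "U' = U" using a'(2) ff aa by simp
  note A = valid_D[OF va'[unfolded aa U']] and B = valid_D[OF vf[unfolded ff]]
  define n where "n = leaves U"
  have n1: "n \<ge> 1" using B n_def by simp
  obtain k' where k': "1 \<le> k'" "k' \<le> n" "f1 = ex f k'" using step(2) ff n_def unfolding E_iff by auto
  have h: "h \<in> carrier (G n)" using B unfolding n_def by blast
  have kr: "1 \<le> rho n h k'" "rho n h k' \<le> n" using rho_range[OF n1 h] k' by auto
  have E1: "(a', ex a' (rho n h k')) \<in> E" using E_ex[OF va', of "rho n h k'"] kr aa A n_def U' by simp
  have tp: "tprod a' f = (T, g \<otimes>\<^bsub>G (leaves T)\<^esub> h, W)" by (simp add: tprod_def aa ff)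
  have P: "tprod (ex a' (rho n h k')) f1 = ex (tprod a' f) k'"
    unfolding tp using pcore[OF va'[unfolded aa U'] vf[unfolded ff] k'(1)] k' aa ff U' n_def by simp
  have vt: "valid (tprod a' f)" using valid_tprod[OF va' vf a'(2)] .
  have E2: "(tprod a' f, ex (tprod a' f) k') \<in> E"
    using E_ex[OF vt, of k'] k' A n_def aa U' unfolding tprod_def by simp
  have r: "rt (ex a' (rho n h k')) = fst f1" using k' aa ff U' n_def by simp
  have s1: "(a, ex a' (rho n h k')) \<in> E\<^sup>*" using a'(1) E1 by (rule rtrancl.rtrancl_into_rtrancl)
  have s2: "(tprod a b, ex (tprod a' f) k') \<in> E\<^sup>*" using a'(3) E2 by (rule rtrancl.rtrancl_into_rtrancl)
  show ?case
  proof (intro exI[of _ "ex a' (rho n h k')"] conjI)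
    show "(tprod a b, tprod (ex a' (rho n h k')) f1) \<in> E\<^sup>*" unfolding P using s2 .
  qed (use s1 r in auto)
qed

lemma Es_S: assumes "(x, y) \<in> E\<^sup>*" shows "(x, y) \<in> S\<^sup>*"
proof -
  have "E\<^sup>* \<subseteq> S\<^sup>*" by (rule rtrancl_mono) blast
  then show ?thesis using assms by blast
qed

lemma S_sym: "(x, y) \<in> S\<^sup>* \<Longrightarrow> (y, x) \<in> S\<^sup>*"
proof -
  assume "(x, y) \<in> S\<^sup>*"
  then have "(y, x) \<in> (S\<inverse>)\<^sup>*" by (simp add: rtrancl_converseI)
  moreover have "S\<inverse> = S" by auto
  ultimately show ?thesis by simp
qed

lemma prod_welldef:
  assumes va: "valid a" and vb: "valid b" and va': "valid a'" and vb': "valid b'"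
    and m: "rt a = fst b" and m': "rt a' = fst b'" and aa: "(a, a') \<in> S\<^sup>*" and bb: "(b, b') \<in> S\<^sup>*"
  shows "(tprod a b, tprod a' b') \<in> S\<^sup>*"
proof -
  obtain c where c: "(a, c) \<in> E\<^sup>*" "(a', c) \<in> E\<^sup>*" using CR[OF aa] by blast
  obtain bc where bc: "(b, bc) \<in> E\<^sup>*" "rt c = fst bc" "(tprod a b, tprod c bc) \<in> E\<^sup>*"
    using lift_prod_left[OF c(1) va vb m] by blast
  obtain bc' where bc': "(b', bc') \<in> E\<^sup>*" "rt c = fst bc'" "(tprod a' b', tprod c bc') \<in> E\<^sup>*"
    using lift_prod_left[OF c(2) va' vb' m'] by blast
  have "(bc, bc') \<in> S\<^sup>*"
    using rtrancl_trans[OF rtrancl_trans[OF S_sym[OF Es_S[OF bc(1)]] bb] Es_S[OF bc'(1)]] .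
  then obtain f where f: "(bc, f) \<in> E\<^sup>*" "(bc', f) \<in> E\<^sup>*" using CR by blast
  have vc: "valid c" using Es_valid c(1) va by blast
  have vbc: "valid bc" "valid bc'" using Es_valid bc(1) bc'(1) vb vb' by blast+
  obtain c1 where c1: "(c, c1) \<in> E\<^sup>*" "rt c1 = fst f" "(tprod c bc, tprod c1 f) \<in> E\<^sup>*"
    using lift_prod_right[OF f(1) vc vbc(1) bc(2)] by blast
  obtain c1' where c1': "(c, c1') \<in> E\<^sup>*" "rt c1' = fst f" "(tprod c bc', tprod c1' f) \<in> E\<^sup>*"
    using lift_prod_right[OF f(2) vc vbc(2) bc'(2)] by blast
  have "c1 = c1'" using uniq_right[OF vc c1(1) c1'(1)] c1(2) c1'(2) by simp
  then have "(tprod c1 f, tprod c bc') \<in> S\<^sup>*" using S_sym[OF Es_S[OF c1'(3)]] by simp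
  then show ?thesis
    using rtrancl_trans[OF rtrancl_trans[OF rtrancl_trans[OF Es_S[OF bc(3)] Es_S[OF c1(3)]]] S_sym[OF Es_S[OF bc'(3)]]]
    by blast
qed

lemma inv_step:
  assumes "(t, s) \<in> E" shows "(tinvt t, tinvt s) \<in> E"
proof -
  obtain T g U where t: "t = (T, g, U)" by (cases t)
  obtain k where k: "valid t" "1 \<le> k" "k \<le> leaves T" "s = ex t k" using assms t unfolding E_iff by auto
  note A = valid_D[OF k(1)[unfolded t]]
  define n where "n = leaves T"
  have n1: "n \<ge> 1" using A n_def by simp
  have g: "g \<in> carrier (G n)" using A unfolding n_def by blast
  interpret Gn: group "G n" using grp n1 by simp
  interpret Gm: group "G (n + d - 1)" using grp[of "n + d - 1"] n1 d1 by simp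
  have gi: "inv\<^bsub>G n\<^esub> g \<in> carrier (G n)" using g by simp
  define j where "j = rho n g k"
  have j: "1 \<le> j" "j \<le> n" using rho_range[OF n1 g] k n_def j_def by auto
  have r: "rho n (inv\<^bsub>G n\<^esub> g) j = k"
  proof -
    have "rho n (inv\<^bsub>G n\<^esub> g \<otimes>\<^bsub>G n\<^esub> g) = rho n (inv\<^bsub>G n\<^esub> g) \<circ> rho n g" using rho_mult[OF n1 gi g] .
    then show ?thesis using rho_one[OF n1] g j_def by (metis Gn.l_inv comp_apply id_apply)
  qed
  have kc: "kappa n k g \<in> carrier (G (n + d - 1))" "kappa n j (inv\<^bsub>G n\<^esub> g) \<in> carrier (G (n + d - 1))"
    using kappa_closed[OF n1] k j g gi n_def by auto
  have "kappa n k (inv\<^bsub>G n\<^esub> g \<otimes>\<^bsub>G n\<^esub> g) = kappa n j (inv\<^bsub>G n\<^esub> g) \<otimes>\<^bsub>G (n + d - 1)\<^esub> kappa n k g"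
    using C1[OF n1 _ _ gi g] k n_def j_def by simp
  moreover have "inv\<^bsub>G n\<^esub> g \<otimes>\<^bsub>G n\<^esub> g = \<one>\<^bsub>G n\<^esub>" using Gn.l_inv[OF g] .
  moreover have "kappa n k \<one>\<^bsub>G n\<^esub> = \<one>\<^bsub>G (n + d - 1)\<^esub>" using kappa_one[OF n1] k unfolding n_def by simp
  ultimately have "kappa n j (inv\<^bsub>G n\<^esub> g) \<otimes>\<^bsub>G (n + d - 1)\<^esub> kappa n k g = \<one>\<^bsub>G (n + d - 1)\<^esub>"
    by simp
  then have kinv: "inv\<^bsub>G (n + d - 1)\<^esub> (kappa n k g) = kappa n j (inv\<^bsub>G n\<^esub> g)"
    using Gm.inv_equality kc by blast
  have vi: "valid (tinvt t)" using valid_tinvt[OF k(1)] .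
  have lU: "leaves U = n" using A n_def by simp
  have lT: "leaves (add_caret d j T) = n + d - 1" using valid_ex(2)[of T g U k] k t n_def j_def by simp
  have "tinvt s = ex (tinvt t) j"
    unfolding tinvt_def using k(4) t lU lT r kinv by (simp add: n_def[symmetric] j_def[symmetric])
  moreover have "(tinvt t, ex (tinvt t) j) \<in> E" using E_ex[OF vi, of j] j lU t unfolding tinvt_def by simp
  ultimately show ?thesis by simp
qed

lemma inv_S: "(a, b) \<in> S\<^sup>* \<Longrightarrow> (tinvt a, tinvt b) \<in> S\<^sup>*"
proof (induction b rule: rtrancl_induct)
  case base
  then show ?case by simp
next
  case (step b b')
  then have "(tinvt b, tinvt b') \<in> S" using inv_step by blast
  then show ?case using step(3) by (meson rtrancl.rtrancl_into_rtrancl)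
qed

lemma S_valid: "(a, b) \<in> S\<^sup>* \<Longrightarrow> valid a \<Longrightarrow> valid b"
  by (induction rule: rtrancl_induct) (auto dest: E_valid)

lemma in_tclass: "x \<in> tclass d G rho kappa a \<longleftrightarrow> (a, x) \<in> S\<^sup>*"
  unfolding tclass_def by simp

lemma tclass_eq: "(a, b) \<in> S\<^sup>* \<Longrightarrow> tclass d G rho kappa a = tclass d G rho kappa b"
  unfolding tclass_def using S_sym by (blast intro: rtrancl_trans)

lemma one_inv:
  assumes "(a, b) \<in> S\<^sup>*" "valid a" "fst (snd a) = \<one>\<^bsub>G (leaves (fst a))\<^esub>"
  shows "fst (snd b) = \<one>\<^bsub>G (leaves (fst b))\<^esub>"
  using assms(1)
proof (induction b rule: rtrancl_induct)
  case base
  then show ?case using assms by simp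
next
  case (step b b')
  have vb: "valid b" using S_valid step(1) assms(2) by blast
  show ?case
  proof (cases "(b, b') \<in> E")
    case True
    obtain T g U where bb: "b = (T, g, U)" by (cases b)
    obtain k where k: "1 \<le> k" "k \<le> leaves T" "b' = ex b k" using True bb unfolding E_iff by auto
    note A = valid_D[OF vb[unfolded bb]]
    have "leaves (fst b') = leaves T + d - 1" using valid_ex(2)[OF vb[unfolded bb] k(1,2)] k bb by simp
    then show ?thesis using kappa_one[of "leaves T" k] A k step(3) bb by simp
  next
    case False
    then have E1: "(b', b) \<in> E" using step(2) by blast
    obtain T g U where bb: "b' = (T, g, U)" by (cases b')
    obtain k where k: "valid b'" "1 \<le> k" "k \<le> leaves T" "b = ex b' k" using E1 bb unfolding E_iff by auto
    note A = valid_D[OF k(1)[unfolded bb]]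
    define n where "n = leaves T"
    have n1: "n \<ge> 1" using A n_def by simp
    interpret Gn: group "G n" using grp n1 by simp
    have "leaves (fst b) = n + d - 1" using valid_ex(2)[OF k(1)[unfolded bb] k(2,3)] k bb n_def by simp
    then have "kappa n k g = kappa n k \<one>\<^bsub>G n\<^esub>" using step(3) k bb kappa_one[OF n1, of k] n_def by simp
    moreover have "g \<in> carrier (G n)" "k \<le> n" using A k unfolding n_def by auto
    ultimately have "g = \<one>\<^bsub>G n\<^esub>" using inj_onD[OF kappa_inj[OF n1 k(2)]] by simp
    then show ?thesis using bb n_def by simp
  qed
qed

lemma tmult_eq:
  assumes v0: "valid a0" "valid b0" and ab: "a \<in> tclass d G rho kappa a0" "b \<in> tclass d G rho kappa b0"
    and m: "rt a = fst b"
  shows "tmult d G rho kappa (tclass d G rho kappa a0) (tclass d G rho kappa b0) = tclass d G rho kappa (tprod a b)"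
proof -
  let ?x = "tclass d G rho kappa a0" and ?y = "tclass d G rho kappa b0"
  define P where "P z \<longleftrightarrow> (\<exists>T g U h W. (T, g, U) \<in> ?x \<and> (U, h, W) \<in> ?y \<and>
        z = tclass d G rho kappa (T, g \<otimes>\<^bsub>G (leaves T)\<^esub> h, W))" for z
  obtain T g U where a: "a = (T, g, U)" by (cases a)
  obtain U' h W where b: "b = (U', h, W)" by (cases b)
  have U': "U' = U" using m a b by simp
  have "P (tclass d G rho kappa (tprod a b))"
    unfolding P_def tprod_def a b U' fst_conv snd_conv
    apply (rule exI[of _ T], rule exI[of _ g], rule exI[of _ U], rule exI[of _ h], rule exI[of _ W])
    using ab a b U' by simp
  then have "P (SOME z. P z)" by (rule someI)
  then obtain T1 g1 U1 h1 W1 where w: "(T1, g1, U1) \<in> ?x" "(U1, h1, W1) \<in> ?y"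
    "(SOME z. P z) = tclass d G rho kappa (T1, g1 \<otimes>\<^bsub>G (leaves T1)\<^esub> h1, W1)"
    unfolding P_def by blast
  have a0a: "(a0, a) \<in> S\<^sup>*" "(b0, b) \<in> S\<^sup>*" using ab unfolding in_tclass by auto
  have a0w: "(a0, (T1, g1, U1)) \<in> S\<^sup>*" "(b0, (U1, h1, W1)) \<in> S\<^sup>*" using w(1,2) unfolding in_tclass by auto
  have va: "valid a" "valid b" using S_valid[OF a0a(1) v0(1)] S_valid[OF a0a(2) v0(2)] by auto
  have vw: "valid (T1, g1, U1)" "valid (U1, h1, W1)" using S_valid[OF a0w(1) v0(1)] S_valid[OF a0w(2) v0(2)] by auto
  have c1: "(a, (T1, g1, U1)) \<in> S\<^sup>*" using rtrancl_trans[OF S_sym[OF a0a(1)] a0w(1)] .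
  have c2: "(b, (U1, h1, W1)) \<in> S\<^sup>*" using rtrancl_trans[OF S_sym[OF a0a(2)] a0w(2)] .
  have m1: "rt (T1, g1, U1) = fst (U1, h1, W1)" by simp
  have "(tprod a b, tprod (T1, g1, U1) (U1, h1, W1)) \<in> S\<^sup>*"
    using prod_welldef[OF va vw m m1 c1 c2] .
  moreover have "tprod (T1, g1, U1) (U1, h1, W1) = (T1, g1 \<otimes>\<^bsub>G (leaves T1)\<^esub> h1, W1)"
    by (simp add: tprod_def)
  ultimately have "tclass d G rho kappa (tprod a b) = tclass d G rho kappa (T1, g1 \<otimes>\<^bsub>G (leaves T1)\<^esub> h1, W1)"
    using tclass_eq by metis
  moreover have "tmult d G rho kappa ?x ?y = (SOME z. P z)" unfolding tmult_def P_def by (rule refl)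
  ultimately show ?thesis using w(3) by simp
qed

lemma tinv_eq:
  assumes v0: "valid a0"
  shows "tinv d G rho kappa (tclass d G rho kappa a0) = tclass d G rho kappa (tinvt a0)"
proof -
  let ?x = "tclass d G rho kappa a0"
  define P where "P z \<longleftrightarrow> (\<exists>T g U. (T, g, U) \<in> ?x \<and>
        z = tclass d G rho kappa (U, inv\<^bsub>G (leaves T)\<^esub> g, T))" for z
  obtain T g U where a: "a0 = (T, g, U)" by (cases a0)
  have "P (tclass d G rho kappa (tinvt a0))"
    unfolding P_def tinvt_def a fst_conv snd_conv
    apply (rule exI[of _ T], rule exI[of _ g], rule exI[of _ U])
    using a unfolding in_tclass by simp
  then have "P (SOME z. P z)" by (rule someI)
  then obtain T1 g1 U1 where w: "(T1, g1, U1) \<in> ?x"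
    "(SOME z. P z) = tclass d G rho kappa (U1, inv\<^bsub>G (leaves T1)\<^esub> g1, T1)"
    unfolding P_def by blast
  have "(a0, (T1, g1, U1)) \<in> S\<^sup>*" using w(1) unfolding in_tclass .
  then have "(tinvt a0, tinvt (T1, g1, U1)) \<in> S\<^sup>*" by (rule inv_S)
  moreover have "tinvt (T1, g1, U1) = (U1, inv\<^bsub>G (leaves T1)\<^esub> g1, T1)" by (simp add: tinvt_def)
  ultimately have "tclass d G rho kappa (tinvt a0) = tclass d G rho kappa (U1, inv\<^bsub>G (leaves T1)\<^esub> g1, T1)"
    using tclass_eq by metis
  moreover have "tinv d G rho kappa ?x = (SOME z. P z)" unfolding tinv_def P_def by (rule refl)
  ultimately show ?thesis using w(2) by simp
qed

lemma Fd_one: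
  assumes "tclass d G rho kappa c \<in> Fd d G rho kappa" "valid c"
  shows "fst (snd c) = \<one>\<^bsub>G (leaves (fst c))\<^esub>"
proof -
  obtain V W where VW: "tclass d G rho kappa c = tree_pair d G rho kappa V W" "dary d V" "dary d W" "leaves V = leaves W"
    using assms(1) unfolding Fd_def by blast
  have l1: "leaves V \<ge> 1" using leaves_pos[OF d1 VW(2)] .
  interpret group "G (leaves V)" using grp l1 by simp
  have o: "\<one>\<^bsub>G (leaves V)\<^esub> \<in> carrier (G (leaves V))" by simp
  have v: "valid (V, \<one>\<^bsub>G (leaves V)\<^esub>, W)" using VW(2-4) o unfolding valid_triple_def by simp
  have "c \<in> tclass d G rho kappa c" unfolding in_tclass by simp
  then have "c \<in> tree_pair d G rho kappa V W" using VW(1) by simp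
  then have "((V, \<one>\<^bsub>G (leaves V)\<^esub>, W), c) \<in> S\<^sup>*" unfolding tree_pair_def in_tclass .
  from one_inv[OF this v] show ?thesis by simp
qed

lemma grow: "valid t \<Longrightarrow> \<exists>s. (t, s) \<in> E\<^sup>* \<and> m \<le> leaves (fst s)"
proof (induction m)
  case 0
  then show ?case by blast
next
  case (Suc m)
  then obtain s where s: "(t, s) \<in> E\<^sup>*" "m \<le> leaves (fst s)" by blast
  have vs: "valid s" using Es_valid s(1) Suc.prems by blast
  have l: "leaves (fst s) \<ge> 1" using valid_leaves[OF vs] by simp
  have E1: "(s, ex s 1) \<in> E" using E_ex[OF vs, of 1] l by simp
  have "leaves (fst (ex s 1)) = leaves (fst s) + d - 1" using E_leaves[OF E1] by simp
  then have "Suc m \<le> leaves (fst (ex s 1))" using s(2) l d2 by simp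
  moreover have "(t, ex s 1) \<in> E\<^sup>*" using s(1) E1 by (rule rtrancl.rtrancl_into_rtrancl)
  ultimately show ?case by blast
qed

lemma main:
  assumes div: "diverse_from d G kappa n0" and xT: "x \<in> Tgroup d G rho kappa"
    and hyp: "\<forall>T U. dary d T \<and> dary d U \<and> leaves T = leaves U \<and> leaves T \<ge> n0 \<longrightarrow>
           tmult d G rho kappa
             (tmult d G rho kappa (tinv d G rho kappa x) (tree_pair d G rho kappa T U)) x
           \<in> Fd d G rho kappa"
  shows "x \<in> Fd d G rho kappa"
proof -
  obtain t0 where t0: "valid t0" "x = tclass d G rho kappa t0" using xT unfolding Tgroup_def by blast
  obtain t where t: "(t0, t) \<in> E\<^sup>*" "n0 \<le> leaves (fst t)" using grow[OF t0(1)] by blast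
  have vt: "valid t" using Es_valid[OF t(1) t0(1)] .
  have xt: "x = tclass d G rho kappa t" using t0(2) tclass_eq[OF Es_S[OF t(1)]] by simp
  obtain A g B where tA: "t = (A, g, B)" by (cases t)
  define n where "n = leaves A"
  have VA: "dary d A" "dary d B" "leaves B = n" "g \<in> carrier (G n)" "n \<ge> 1"
    using valid_D[OF vt[unfolded tA]] unfolding n_def by auto
  have nn0: "n0 \<le> n" using t(2) tA n_def by simp
  define m where "m = n + d - 1"
  have m1: "m \<ge> 1" using VA(5) m_def d1 by simp
  interpret Gn: group "G n" using grp VA(5) by simp
  interpret Gm: group "G m" using grp m1 by simp
  have kc: "kappa n k g \<in> carrier (G m)" if "1 \<le> k" "k \<le> n" for k
    using kappa_closed[OF VA(5) that VA(4)] m_def by simp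
  have eqk: "kappa n k g = kappa n l g" if k: "1 \<le> k" "k \<le> n" and l: "1 \<le> l" "l \<le> n" for k l
  proof -
    define T where "T = add_caret d (rho n g k) A"
    define U where "U = add_caret d (rho n g l) A"
    have tk: "ex t k = (T, kappa n k g, add_caret d k B)" using tA T_def n_def by simp
    have tl: "ex t l = (U, kappa n l g, add_caret d l B)" using tA U_def n_def by simp
    have Ek: "(t, ex t k) \<in> E" using E_ex[OF vt] k tA n_def by simp
    have El: "(t, ex t l) \<in> E" using E_ex[OF vt] l tA n_def by simp
    have lT: "leaves T = m" using valid_ex(2)[OF vt[unfolded tA], of k] k T_def n_def m_def by simp
    have lU: "leaves U = m" using valid_ex(2)[OF vt[unfolded tA], of l] l U_def n_def m_def by simp
    have lBk: "leaves (add_caret d k B) = m" using valid_ex(3)[OF vt[unfolded tA], of k] k n_def m_def by simp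
    have lBl: "leaves (add_caret d l B) = m" using valid_ex(3)[OF vt[unfolded tA], of l] l n_def m_def by simp
    have vk: "valid (ex t k)" "valid (ex t l)" using E_valid Ek El by auto
    have dT: "dary d T" "dary d U" "dary d (add_caret d k B)" "dary d (add_caret d l B)"
      using vk unfolding tk tl valid_triple_def by auto
    have y1: "tinv d G rho kappa x = tclass d G rho kappa (tinvt t)" using tinv_eq[OF vt] xt by simp
    have ik: "tinvt (ex t k) = (add_caret d k B, inv\<^bsub>G m\<^esub> (kappa n k g), T)"
      unfolding tk tinvt_def using lT by simp
    have mem1: "tinvt (ex t k) \<in> tclass d G rho kappa (tinvt t)"
      unfolding in_tclass using inv_step[OF Ek] by blast
    have o: "\<one>\<^bsub>G m\<^esub> \<in> carrier (G m)" by simp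
    have vTU: "valid (T, \<one>\<^bsub>G m\<^esub>, U)" unfolding valid_triple_def using dT lT lU o by simp
    have tp: "tree_pair d G rho kappa T U = tclass d G rho kappa (T, \<one>\<^bsub>G m\<^esub>, U)"
      unfolding tree_pair_def using lT by simp
    have mem2: "(T, \<one>\<^bsub>G m\<^esub>, U) \<in> tclass d G rho kappa (T, \<one>\<^bsub>G m\<^esub>, U)" unfolding in_tclass by simp
    have ikc: "inv\<^bsub>G m\<^esub> (kappa n k g) \<in> carrier (G m)" using kc[OF k] by simp
    define p where "p = (add_caret d k B, inv\<^bsub>G m\<^esub> (kappa n k g), U)"
    have pp: "tprod (tinvt (ex t k)) (T, \<one>\<^bsub>G m\<^esub>, U) = p"
      unfolding ik tprod_def p_def using lBk ikc by simp
    have y2: "tmult d G rho kappa (tinv d G rho kappa x) (tree_pair d G rho kappa T U) = tclass d G rho kappa p"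
      unfolding y1 tp using tmult_eq[OF valid_tinvt[OF vt] vTU mem1 mem2] ik pp by simp
    have vp: "valid p" unfolding p_def valid_triple_def using dT lBk lU ikc by simp
    have memp: "p \<in> tclass d G rho kappa p" unfolding in_tclass by simp
    have meml: "ex t l \<in> tclass d G rho kappa t" unfolding in_tclass using El by blast
    define q where "q = (add_caret d k B, inv\<^bsub>G m\<^esub> (kappa n k g) \<otimes>\<^bsub>G m\<^esub> kappa n l g, add_caret d l B)"
    have pq: "tprod p (ex t l) = q" unfolding p_def tl tprod_def q_def using lBk by simp
    have y3: "tmult d G rho kappa (tmult d G rho kappa (tinv d G rho kappa x) (tree_pair d G rho kappa T U)) x
        = tclass d G rho kappa q"
    proof -
      have "tmult d G rho kappa (tclass d G rho kappa p) (tclass d G rho kappa t) = tclass d G rho kappa q"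
        using tmult_eq[OF vp vt memp meml] pq tl unfolding p_def by simp
      then show ?thesis using y2 xt by simp
    qed
    have qc: "inv\<^bsub>G m\<^esub> (kappa n k g) \<otimes>\<^bsub>G m\<^esub> kappa n l g \<in> carrier (G m)" using ikc kc[OF l] by simp
    have vq: "valid q" unfolding q_def valid_triple_def using dT lBk lBl qc by simp
    have "tclass d G rho kappa q \<in> Fd d G rho kappa"
    proof -
      have "n0 \<le> leaves T" using lT nn0 m_def d1 by simp
      then have "tmult d G rho kappa (tmult d G rho kappa (tinv d G rho kappa x) (tree_pair d G rho kappa T U)) x
           \<in> Fd d G rho kappa" using hyp dT(1,2) lT lU by simp
      then show ?thesis using y3 by simp
    qed
    from Fd_one[OF this vq] have "inv\<^bsub>G m\<^esub> (kappa n k g) \<otimes>\<^bsub>G m\<^esub> kappa n l g = \<one>\<^bsub>G m\<^esub>"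
      unfolding q_def using lBk by simp
    then have "kappa n l g = kappa n k g \<otimes>\<^bsub>G m\<^esub> \<one>\<^bsub>G m\<^esub>"
      using Gm.inv_solve_left'[OF o kc[OF k] kc[OF l]] by simp
    then show ?thesis using kc[OF k] by simp
  qed
  have D: "\<forall>n\<ge>n0. (\<Inter>k\<in>{1..n}. kappa n k ` carrier (G n)) = {\<one>\<^bsub>G (n + d - 1)\<^esub>}"
    using div unfolding diverse_from_def .
  have I: "(\<Inter>k\<in>{1..n}. kappa n k ` carrier (G n)) = {\<one>\<^bsub>G m\<^esub>}"
    unfolding m_def using D[rule_format, OF nn0] .
  have M: "kappa n 1 g \<in> (\<Inter>k\<in>{1..n}. kappa n k ` carrier (G n))"
  proof (rule INT_I)
    fix k assume kk: "k \<in> {1..n}"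
    have "kappa n 1 g = kappa n k g" using eqk[of 1 k] kk VA(5) by simp
    then show "kappa n 1 g \<in> kappa n k ` carrier (G n)" using VA(4) by (rule image_eqI)
  qed
  have "kappa n 1 g = \<one>\<^bsub>G m\<^esub>" using M unfolding I by simp
  also have "\<dots> = kappa n 1 \<one>\<^bsub>G n\<^esub>" using kappa_one[OF VA(5)] VA(5) m_def by simp
  finally have e: "kappa n 1 g = kappa n 1 \<one>\<^bsub>G n\<^esub>" .
  have g1: "g = \<one>\<^bsub>G n\<^esub>"
    by (rule inj_onD[OF kappa_inj[OF VA(5) order_refl VA(5)] e VA(4) Gn.one_closed])
  have "x = tclass d G rho kappa (A, \<one>\<^bsub>G n\<^esub>, B)" using xt tA g1 by simp
  also have "\<dots> = tree_pair d G rho kappa A B" unfolding tree_pair_def n_def ..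
  finally have xA: "x = tree_pair d G rho kappa A B" .
  have lAB: "leaves A = leaves B" using VA(3) n_def by simp
  show ?thesis unfolding Fd_def using xA VA(1,2) lAB by blast
qed

end

theorem mainTheorem2:
  fixes d n0 :: nat
    and G :: "nat \<Rightarrow> 'g monoid"
    and rho :: "nat \<Rightarrow> 'g \<Rightarrow> nat \<Rightarrow> nat"
    and kappa :: "nat \<Rightarrow> nat \<Rightarrow> 'g \<Rightarrow> 'g"
    and x :: "(tree \<times> 'g \<times> tree) set"
  assumes "d \<ge> 2"
    and "cloning_system d G rho kappa"
    and "diverse d G kappa"
    and "diverse_from d G kappa n0"
    and "x \<in> Tgroup d G rho kappa"
    and "\<forall>T U. dary d T \<and> dary d U \<and> leaves T = leaves U \<and> leaves T \<ge> n0 \<longrightarrow>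
           tmult d G rho kappa
             (tmult d G rho kappa (tinv d G rho kappa x) (tree_pair d G rho kappa T U)) x
           \<in> Fd d G rho kappa"
  shows "x \<in> Fd d G rho kappa"
proof -
  interpret CS d G rho kappa using assms(1,2) by unfold_locales
  show ?thesis using main[OF assms(4,5,6)] .
qed

end
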